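(* For $j,k\in\mathbb{N}$ define $D_{j,k}:[0,\infty)\to\{0,1,\dots,2^k-1\}$ by $D_{j,k}(x):=\lfloor2^{j+k}x\rfloor\bmod 2^k$. Let $(\zeta_n)_{n\in\mathbb{N}}$ be i.i.d. random variables taking values in $\mathbb{N}=\{0,1,2,\dots\}$ such that $\mathbf{P}(\zeta_0=i)>0$ for all $i\in\mathbb{N}$, and assume that $\widehat S:=\sum_{n=0}^\infty\zeta_n2^{-n}$ converges almost surely. Then for every positive integer $k$ and every $\ell\in\{0,1,\dots,2^k-1\}$, almost surely $$\lim_{n\to\infty}\frac1n\sum_{j=0}^{n-1}\mathbf{1}_{\{D_{j,k}(\widehat S)=\ell\}}=\mathbf{P}\big(D_{0,k}(\widehat S)=\ell\big).$$ *)

theory Defs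
  imports "HOL-Probability.Probability"
begin

definition D :: "nat \<Rightarrow> nat \<Rightarrow> real \<Rightarrow> nat" where
  "D j k x = nat \<lfloor>2 ^ (j + k) * x\<rfloor> mod 2 ^ k"

definition Shat :: "(nat \<Rightarrow> 'a \<Rightarrow> nat) \<Rightarrow> 'a \<Rightarrow> real" where
  "Shat \<zeta> \<omega> = (\<Sum>n. real (\<zeta> n \<omega>) / 2 ^ n)"

end

theory Submission
  imports Defs
begin

definition sh :: "nat \<Rightarrow> (nat \<Rightarrow> nat) \<Rightarrow> (nat \<Rightarrow> nat)" where
  "sh j w = (\<lambda>i. w (j + i))"

abbreviation SEQ :: "(nat \<Rightarrow> nat) measure" where
  "SEQ \<equiv> PiM UNIV (\<lambda>_. count_space UNIV)"

lemma sh_sh: "sh i (sh j w) = sh (j + i) w"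
  by (simp add: sh_def add.assoc)

lemma sh_0[simp]: "sh 0 w = w" by (simp add: sh_def)

lemma measurable_sh[measurable]: "sh j \<in> measurable SEQ SEQ"
  unfolding sh_def by (rule measurable_PiM_single') (auto simp: space_PiM)

locale iidseq = prob_space M for M :: "'a measure" +
  fixes \<zeta> :: "nat \<Rightarrow> 'a \<Rightarrow> nat"
  assumes indep: "indep_vars (\<lambda>_. count_space UNIV) \<zeta> UNIV"
  and ident: "\<And>n. distr M (count_space UNIV) (\<zeta> n) = distr M (count_space UNIV) (\<zeta> 0)"
begin

lemma rv[measurable]: "\<zeta> n \<in> measurable M (count_space UNIV)"
  using indep unfolding indep_vars_def by auto

definition zz :: "'a \<Rightarrow> nat \<Rightarrow> nat" where "zz \<omega> = (\<lambda>i. \<zeta> i \<omega>)"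

lemma zz_meas[measurable]: "zz \<in> measurable M SEQ"
  unfolding zz_def by (rule measurable_PiM_single') (auto simp: space_PiM)

abbreviation "P0 \<equiv> distr M (count_space UNIV) (\<zeta> 0)"
abbreviation "Q \<equiv> PiM UNIV (\<lambda>_::nat. P0)"

lemma sets_Q: "sets Q = sets SEQ"
  by (intro sets_PiM_cong) auto

lemma law0: "distr M Q zz = Q"
proof -
  have "distr M (\<Pi>\<^sub>M i\<in>UNIV. count_space UNIV) (\<lambda>x. \<lambda>i\<in>UNIV. \<zeta> i x) = (\<Pi>\<^sub>M i\<in>UNIV. distr M (count_space UNIV) (\<zeta> i))"
    using indep by (subst (asm) indep_vars_iff_distr_eq_PiM) auto
  moreover have "(\<Pi>\<^sub>M i\<in>UNIV. distr M (count_space UNIV) (\<zeta> i)) = Q"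
    by (intro PiM_cong refl) (rule ident)
  moreover have "(\<lambda>x. \<lambda>i\<in>UNIV. \<zeta> i x) = zz" by (auto simp: zz_def fun_eq_iff)
  ultimately have "distr M SEQ zz = Q" by simp
  moreover have "distr M SEQ zz = distr M Q zz"
    by (rule distr_cong) (auto simp: sets_Q)
  ultimately show ?thesis by simp
qed

lemma lawj: "distr M Q (\<lambda>\<omega>. sh j (zz \<omega>)) = Q"
proof -
  have pQ: "prob_space P0" by (rule prob_space_distr) simp
  have m1: "zz \<in> measurable M Q" using zz_meas by (simp add: measurable_cong_sets[OF refl sets_Q])
  have m2: "sh j \<in> measurable Q Q" using measurable_sh by (simp add: measurable_cong_sets[OF sets_Q sets_Q])
  have "distr M Q (\<lambda>\<omega>. sh j (zz \<omega>)) = distr (distr M Q zz) Q (sh j)"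
    using m1 m2 by (subst distr_distr) (auto simp: comp_def)
  also have "\<dots> = distr Q Q (sh j)" by (simp add: law0)
  also have "\<dots> = distr Q Q (\<lambda>\<omega>. \<lambda>n\<in>UNIV. \<omega> (j + n))"
    by (intro distr_cong refl) (auto simp: sh_def)
  also have "\<dots> = Q"
    using distr_PiM_reindex[of UNIV "\<lambda>_. P0" "\<lambda>n. j + n" UNIV] pQ by simp
  finally show ?thesis .
qed

lemma integral_sh:
  fixes g :: "(nat \<Rightarrow> nat) \<Rightarrow> real"
  assumes g: "g \<in> borel_measurable SEQ"
  shows "(\<integral>\<omega>. g (sh j (zz \<omega>)) \<partial>M) = (\<integral>\<omega>. g (zz \<omega>) \<partial>M)"
proof -
  have gQ: "g \<in> borel_measurable Q" using g by (simp add: measurable_cong_sets[OF sets_Q refl])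
  have m1: "zz \<in> measurable M Q" using zz_meas by (simp add: measurable_cong_sets[OF refl sets_Q])
  have m2: "(\<lambda>\<omega>. sh j (zz \<omega>)) \<in> measurable M Q"
    using measurable_sh zz_meas by (simp add: measurable_cong_sets[OF refl sets_Q])
  have "(\<integral>\<omega>. g (sh j (zz \<omega>)) \<partial>M) = integral\<^sup>L (distr M Q (\<lambda>\<omega>. sh j (zz \<omega>))) g"
    using m2 gQ by (subst integral_distr) auto
  also have "\<dots> = integral\<^sup>L (distr M Q zz) g" by (simp add: lawj law0)
  also have "\<dots> = (\<integral>\<omega>. g (zz \<omega>) \<partial>M)"
    using m1 gQ by (subst integral_distr) auto
  finally show ?thesis .
qed

end

lemma sum_split_add: "(\<Sum>j<a+b. f j) = (\<Sum>j<a. f j) + (\<Sum>j<b. f (a + j)) " for f :: "nat \<Rightarrow> real"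
proof (induction b)
  case (Suc b) then show ?case by (simp add: add.assoc)
qed simp

lemma cover:
  fixes x :: "nat \<Rightarrow> real" and a :: real and N :: nat
  assumes x0: "\<And>j. 0 \<le> x j" and a0: "0 \<le> a"
  shows "a * real L - a * (\<Sum>j<L. if (\<exists>n\<in>{1..N}. a * real n \<le> (\<Sum>i<n. x (s + j + i))) then 0 else 1)
           \<le> (\<Sum>j<L+N. x (s + j))"
proof (induction L arbitrary: s rule: less_induct)
  case (less L)
  define bad where "bad j = (if (\<exists>n\<in>{1..N}. a * real n \<le> (\<Sum>i<n. x (j + i))) then 0 else (1::real))" for j
  have bad01: "0 \<le> bad j" for j by (simp add: bad_def)
  have IH: "\<And>L' s. L' < L \<Longrightarrow> a * real L' - a * (\<Sum>j<L'. bad (s + j)) \<le> (\<Sum>j<L'+N. x (s + j))"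
    using less unfolding bad_def by simp
  have goal: "a * real L - a * (\<Sum>j<L. bad (s + j)) \<le> (\<Sum>j<L+N. x (s + j))"
  proof (cases L)
    case 0 then show ?thesis using x0 a0 by (simp add: sum_nonneg)
  next
    case (Suc L1)
    show ?thesis
    proof (cases "\<exists>n\<in>{1..N}. a * real n \<le> (\<Sum>i<n. x (s + i))")
      case False
      then have bs: "bad s = 1" by (simp add: bad_def)
      have "(\<Sum>j<L. bad (s + j)) = bad s + (\<Sum>j<L1. bad (Suc s + j))"
        unfolding Suc sum.lessThan_Suc_shift by simp
      moreover have "(\<Sum>j<L+N. x (s + j)) = x s + (\<Sum>j<L1+N. x (Suc s + j))"
        unfolding Suc by (simp only: add_Suc sum.lessThan_Suc_shift) simp
      moreover have "a * real L1 - a * (\<Sum>j<L1. bad (Suc s + j)) \<le> (\<Sum>j<L1+N. x (Suc s + j))"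
        using IH[of L1 "Suc s"] Suc by simp
      ultimately show ?thesis using bs x0[of s] Suc by (simp add: algebra_simps)
    next
      case True
      then obtain n where n: "1 \<le> n" "n \<le> N" "a * real n \<le> (\<Sum>i<n. x (s + i))" by auto
      show ?thesis
      proof (cases "n \<le> L")
        case True
        obtain L2 where L2: "L = n + L2" using True le_Suc_ex by blast
        have B: "(\<Sum>j<L. bad (s + j)) = (\<Sum>j<n. bad (s + j)) + (\<Sum>j<L2. bad (s + n + j))"
          unfolding L2 sum_split_add by (simp add: add.assoc)
        have B2: "0 \<le> (\<Sum>j<n. bad (s + j))" by (simp add: sum_nonneg bad01)
        have X: "(\<Sum>j<L+N. x (s + j)) = (\<Sum>j<n. x (s + j)) + (\<Sum>j<L2+N. x (s + n + j))"
          unfolding L2 by (simp add: sum_split_add add.assoc)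
        have "a * real L2 - a * (\<Sum>j<L2. bad (s + n + j)) \<le> (\<Sum>j<L2+N. x (s + n + j))"
          using IH[of L2 "s + n"] L2 n by simp
        moreover have "0 \<le> a * (\<Sum>j<n. bad (s + j))" using B2 a0 by simp
        moreover have "a * real L = a * real n + a * real L2" using L2 by (simp add: algebra_simps)
        moreover have "a * (\<Sum>j<L. bad (s + j)) = a * (\<Sum>j<n. bad (s + j)) + a * (\<Sum>j<L2. bad (s + n + j))"
          using B by (simp add: algebra_simps)
        ultimately show ?thesis using X n(3) by linarith
      next
        case False
        have "(\<Sum>i<n. x (s + i)) \<le> (\<Sum>j<L+N. x (s + j))"
          using n False by (intro sum_mono2) (auto simp: x0)
        moreover have "0 \<le> a * (\<Sum>j<L. bad (s + j))" using a0 by (simp add: sum_nonneg bad01)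
        moreover have "a * real L \<le> a * real n" using False a0 by (intro mult_left_mono) auto
        ultimately show ?thesis using n(3) by linarith
      qed
    qed
  qed
  then show ?case unfolding bad_def by (simp add: add.assoc)
qed

definition Hs :: "(nat \<Rightarrow> real) \<Rightarrow> real \<Rightarrow> bool" where
  "Hs x c \<longleftrightarrow> (\<exists>s::nat. \<forall>N. \<exists>n\<ge>N. c + 1 / real (Suc s) < (\<Sum>j<n. x j) / real n)"

lemma freq_shift1:
  fixes x :: "nat \<Rightarrow> real"
  assumes x01: "\<And>j. 0 \<le> x j" "\<And>j. x j \<le> 1" and F: "\<forall>N. \<exists>n\<ge>N. c < (\<Sum>j<n. x j) / real n"
    and cc: "c' < c"
  shows "\<forall>N. \<exists>n\<ge>N. c' < (\<Sum>j<n. x (m + j)) / real n"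
proof
  fix N
  obtain K :: nat where K: "real m / (c - c') < real K" using reals_Archimedean2 by blast
  obtain n where n: "n \<ge> N + m + K + 1" "c < (\<Sum>j<n. x j) / real n" using F by blast
  define n' where "n' = n - m"
  have nn: "n = m + n'" using n(1) by (simp add: n'_def)
  have n'pos: "n' > 0" "n' \<ge> N" using n(1) by (auto simp: n'_def)
  have S: "(\<Sum>j<n. x j) = (\<Sum>j<m. x j) + (\<Sum>j<n'. x (m + j))" unfolding nn by (rule sum_split_add)
  have Sm: "(\<Sum>j<m. x j) \<le> real m" using sum_mono[of "{..<m}" x "\<lambda>_. 1"] x01 by simp
  have Sb: "0 \<le> (\<Sum>j<n'. x (m + j))" using x01 by (simp add: sum_nonneg)
  have npos: "real n > 0" using n(1) by simp
  have A: "c * real n < (\<Sum>j<n. x j)" using n(2) npos by (simp add: field_simps)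
  have "c' < (\<Sum>j<n'. x (m + j)) / real n'"
  proof (cases "c' < 0")
    case True
    have "0 \<le> (\<Sum>j<n'. x (m + j)) / real n'" using Sb by simp
    then show ?thesis using True by linarith
  next
    case False
    have "real m < (c - c') * real K" using K cc by (simp add: field_simps)
    also have "\<dots> \<le> (c - c') * real n" using cc n(1) by (intro mult_left_mono) auto
    finally have "real m < (c - c') * real n" .
    then have m1: "real m < c * real n - c' * real n" by (simp add: algebra_simps)
    have "c' * real n' \<le> c' * real n" using False nn by (intro mult_left_mono) auto
    then have "c' * real n' < (\<Sum>j<n'. x (m + j))"
      using A S Sm m1 by linarith
    then show ?thesis using n'pos by (simp add: field_simps)
  qed
  then show "\<exists>n\<ge>N. c' < (\<Sum>j<n. x (m + j)) / real n" using n'pos by blast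
qed

lemma freq_shift2:
  fixes x :: "nat \<Rightarrow> real"
  assumes x01: "\<And>j. 0 \<le> x j" "\<And>j. x j \<le> 1" and F: "\<forall>N. \<exists>n\<ge>N. c < (\<Sum>j<n. x (m + j)) / real n"
    and cc: "c' < c"
  shows "\<forall>N. \<exists>n\<ge>N. c' < (\<Sum>j<n. x j) / real n"
proof
  fix N
  obtain K :: nat where K: "real m / (c - c') < real K" using reals_Archimedean2 by blast
  obtain n where n: "n \<ge> N + K + 1" "c < (\<Sum>j<n. x (m + j)) / real n" using F by blast
  have npos: "real n > 0" using n(1) by simp
  have S: "(\<Sum>j<m+n. x j) = (\<Sum>j<m. x j) + (\<Sum>j<n. x (m + j))" by (rule sum_split_add)
  have Sm: "0 \<le> (\<Sum>j<m. x j)" using x01 by (simp add: sum_nonneg)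
  have A: "c * real n < (\<Sum>j<n. x (m + j))" using n(2) npos by (simp add: field_simps)
  have Sb: "(\<Sum>j<n. x (m + j)) \<le> real n" using sum_mono[of "{..<n}" "\<lambda>j. x (m + j)" "\<lambda>_. 1"] x01 by simp
  have "c * real n < 1 * real n" using A Sb by simp
  then have c1: "c < 1" using npos by simp
  have "c' < (\<Sum>j<m+n. x j) / real (m + n)"
  proof (cases "c' < 0")
    case True
    have "0 \<le> (\<Sum>j<m+n. x j) / real (m + n)" using x01 by (simp add: sum_nonneg)
    then show ?thesis using True by linarith
  next
    case False
    have "real m < (c - c') * real K" using K cc by (simp add: field_simps)
    also have "\<dots> \<le> (c - c') * real n" using cc n(1) by (intro mult_left_mono) auto
    finally have "real m < (c - c') * real n" .
    moreover have "c' * real m \<le> real m" using c1 cc False by (simp add: mult_left_le_one_le)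
    ultimately have "c' * real (m + n) < (\<Sum>j<m+n. x j)"
      using A S Sm by (simp add: algebra_simps)
    then show ?thesis using npos by (simp add: field_simps)
  qed
  moreover have "m + n \<ge> N" using n(1) by simp
  ultimately show "\<exists>n\<ge>N. c' < (\<Sum>j<n. x j) / real n" by blast
qed

lemma Hs_shift:
  fixes x :: "nat \<Rightarrow> real"
  assumes x01: "\<And>j. 0 \<le> x j" "\<And>j. x j \<le> 1"
  shows "Hs x c \<longleftrightarrow> Hs (\<lambda>j. x (m + j)) c"
proof
  assume "Hs x c"
  then obtain s where s: "\<forall>N. \<exists>n\<ge>N. c + 1 / real (Suc s) < (\<Sum>j<n. x j) / real n" by (auto simp: Hs_def)
  have "c + 1 / real (Suc (2 * s + 1)) < c + 1 / real (Suc s)" by (simp add: frac_less2)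
  from freq_shift1[OF x01 s this] show "Hs (\<lambda>j. x (m + j)) c" unfolding Hs_def by blast
next
  assume "Hs (\<lambda>j. x (m + j)) c"
  then obtain s where s: "\<forall>N. \<exists>n\<ge>N. c + 1 / real (Suc s) < (\<Sum>j<n. x (m + j)) / real n" by (auto simp: Hs_def)
  have "c + 1 / real (Suc (2 * s + 1)) < c + 1 / real (Suc s)" by (simp add: frac_less2)
  from freq_shift2[OF x01 s this] show "Hs x c" unfolding Hs_def by blast
qed

lemma notHs_ev: "\<not> Hs x c \<Longrightarrow> \<exists>N. \<forall>n\<ge>N. (\<Sum>j<n. x j) / real n \<le> c + 1 / real (Suc s)"
  unfolding Hs_def by (auto simp: not_less)

lemma conv_det:
  fixes x :: "nat \<Rightarrow> real"
  assumes A: "\<forall>s. \<not> Hs x (p + 1 / real (Suc s))"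
    and B: "\<forall>s. \<not> Hs (\<lambda>j. 1 - x j) (1 - p + 1 / real (Suc s))"
  shows "(\<lambda>n. (\<Sum>j<n. x j) / real n) \<longlonglongrightarrow> p"
proof (rule LIMSEQ_I)
  fix r :: real assume r: "0 < r"
  then obtain s0 where s0: "0 < s0" "inverse (real s0) < r / 2" using ex_inverse_of_nat_less[of "r/2"]
    by auto
  define s where "s = s0 - 1"
  have s: "inverse (real (Suc s)) < r / 2" using s0 by (simp add: s_def)
  obtain N1 where N1: "\<forall>n\<ge>N1. (\<Sum>j<n. x j) / real n \<le> p + 1 / real (Suc s) + 1 / real (Suc s)"
    using notHs_ev[of x "p + 1 / real (Suc s)" s] A by blast
  obtain N2 where N2: "\<forall>n\<ge>N2. (\<Sum>j<n. 1 - x j) / real n \<le> 1 - p + 1 / real (Suc s) + 1 / real (Suc s)"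
    using notHs_ev[of "\<lambda>j. 1 - x j" "1 - p + 1 / real (Suc s)" s] B by blast
  have "\<forall>n\<ge>max N1 N2 + 1. norm ((\<Sum>j<n. x j) / real n - p) < r"
  proof (intro allI impI)
    fix n assume n: "max N1 N2 + 1 \<le> n"
    then have npos: "real n > 0" by simp
    have "n \<ge> N1" "n \<ge> N2" using n by auto
    then have e1: "(\<Sum>j<n. x j) / real n \<le> p + 1 / real (Suc s) + 1 / real (Suc s)" using N1 by blast
    have "(\<Sum>j<n. 1 - x j) / real n = 1 - (\<Sum>j<n. x j) / real n"
      using npos by (simp add: sum_subtractf field_simps)
    moreover have "(\<Sum>j<n. 1 - x j) / real n \<le> 1 - p + 1 / real (Suc s) + 1 / real (Suc s)"
      using N2 \<open>n \<ge> N2\<close> by blast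
    ultimately have e2: "p - (1 / real (Suc s) + 1 / real (Suc s)) \<le> (\<Sum>j<n. x j) / real n" by simp
    have "1 / real (Suc s) + 1 / real (Suc s) < r" using s by (simp add: field_simps)
    then show "norm ((\<Sum>j<n. x j) / real n - p) < r" using e1 e2 by (simp add: abs_less_iff) 
  qed
  then show "\<exists>no. \<forall>n\<ge>no. norm ((\<Sum>j<n. x j) / real n - p) < r" by blast
qed

locale iidphi = iidseq +
  fixes \<Phi> :: "(nat \<Rightarrow> nat) \<Rightarrow> real"
  assumes \<Phi>m[measurable]: "\<Phi> \<in> borel_measurable SEQ"
  and \<Phi>0: "\<And>w. 0 \<le> \<Phi> w" and \<Phi>1: "\<And>w. \<Phi> w \<le> 1"
begin

definition Xs :: "'a \<Rightarrow> nat \<Rightarrow> real" where "Xs \<omega> j = \<Phi> (sh j (zz \<omega>))"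

definition \<Psi> :: "real \<Rightarrow> (nat \<Rightarrow> nat) \<Rightarrow> bool" where "\<Psi> c w = Hs (\<lambda>j. \<Phi> (sh j w)) c"

lemma \<Psi>_meas: "{w \<in> space SEQ. \<Psi> c w} \<in> sets SEQ"
  unfolding \<Psi>_def Hs_def by measurable

lemma \<Psi>_sh: "\<Psi> c (sh m w) = \<Psi> c w"
proof -
  have "\<Psi> c w = Hs (\<lambda>j. \<Phi> (sh (m + j) w)) c"
    unfolding \<Psi>_def using Hs_shift[of "\<lambda>j. \<Phi> (sh j w)" c m] \<Phi>0 \<Phi>1 by simp
  then show ?thesis unfolding \<Psi>_def by (simp add: sh_sh)
qed

definition AA :: "nat \<Rightarrow> 'a set set" where
  "AA i = sigma_sets (space M) {\<zeta> i -` S \<inter> space M | S. S \<in> sets (count_space UNIV)}"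

lemma AA_sa: "sigma_algebra (space M) (AA i)"
  unfolding AA_def by (rule sigma_algebra_sigma_sets) auto

lemma AA_indep: "indep_sets AA UNIV"
  using indep unfolding indep_vars_def AA_def by auto

lemma tail_H: "{\<omega> \<in> space M. \<Psi> c (zz \<omega>)} \<in> tail_events AA"
  unfolding tail_events_def
proof (rule InterI, clarsimp)
  fix m
  define G where "G = \<Union> (AA ` {m..})"
  have Gsub: "G \<subseteq> Pow (space M)"
  proof
    fix x assume "x \<in> G"
    then obtain i where "x \<in> AA i" unfolding G_def by blast
    then have "x \<in> sigma_sets (space M) {\<zeta> i -` S \<inter> space M | S. S \<in> sets (count_space UNIV)}"
      unfolding AA_def .
    then have "x \<subseteq> space M" by (rule sigma_sets_into_sp[rotated]) auto
    then show "x \<in> Pow (space M)" by simp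
  qed
  define Mm where "Mm = sigma (space M) G"
  have spMm: "space Mm = space M" unfolding Mm_def using Gsub by simp
  have setsMm: "sets Mm = sigma_sets (space M) G" unfolding Mm_def using Gsub by simp
  have comp: "(\<lambda>\<omega>. \<zeta> (m + i) \<omega>) \<in> measurable Mm (count_space UNIV)" for i
  proof (rule measurableI)
    fix S :: "nat set" assume "S \<in> sets (count_space UNIV)"
    then have "\<zeta> (m + i) -` S \<inter> space M \<in> AA (m + i)"
      unfolding AA_def by (intro sigma_sets.Basic) auto
    then have "\<zeta> (m + i) -` S \<inter> space M \<in> G" unfolding G_def by auto
    then show "(\<lambda>\<omega>. \<zeta> (m + i) \<omega>) -` S \<inter> space Mm \<in> sets Mm"
      unfolding setsMm spMm by (rule sigma_sets.Basic)
  qed simp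
  have shm: "(\<lambda>\<omega>. sh m (zz \<omega>)) \<in> measurable Mm SEQ"
    unfolding sh_def zz_def by (rule measurable_PiM_single') (auto simp: space_PiM comp)
  have "(\<lambda>\<omega>. sh m (zz \<omega>)) -` {w \<in> space SEQ. \<Psi> c w} \<inter> space Mm \<in> sets Mm"
    by (rule measurable_sets[OF shm \<Psi>_meas])
  also have "(\<lambda>\<omega>. sh m (zz \<omega>)) -` {w \<in> space SEQ. \<Psi> c w} \<inter> space Mm = {\<omega> \<in> space M. \<Psi> c (zz \<omega>)}"
    using spMm by (auto simp: \<Psi>_sh space_PiM)
  finally show "{\<omega> \<in> space M. \<Psi> c (zz \<omega>)} \<in> sigma_sets (space M) (\<Union> (AA ` {m..}))"
    unfolding setsMm G_def .
qed

lemma H_01: "prob {\<omega> \<in> space M. \<Psi> c (zz \<omega>)} = 0 \<or> prob {\<omega> \<in> space M. \<Psi> c (zz \<omega>)} = 1"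
  by (rule kolmogorov_0_1_law[OF AA_sa AA_indep tail_H])


lemma Xs_meas[measurable]: "(\<lambda>\<omega>. Xs \<omega> j) \<in> borel_measurable M"
  unfolding Xs_def by measurable

definition pp where "pp = (\<integral>\<omega>. \<Phi> (zz \<omega>) \<partial>M)"

lemma int_X: "(\<integral>\<omega>. Xs \<omega> j \<partial>M) = pp"
  unfolding Xs_def pp_def by (rule integral_sh[OF \<Phi>m])

lemma pp_nonneg: "0 \<le> pp"
  unfolding pp_def by (rule integral_nonneg_AE) (simp add: \<Phi>0)

lemma pp_le1: "pp \<le> 1"
proof -
  have "pp \<le> (\<integral>\<omega>. 1 \<partial>M)" unfolding pp_def
    by (intro integral_mono integrable_const_bound[where B=1]) (auto simp: \<Phi>0 \<Phi>1 abs_le_iff)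
  then show ?thesis by (simp add: prob_space)
qed

definition goodf :: "real \<Rightarrow> nat \<Rightarrow> (nat \<Rightarrow> nat) \<Rightarrow> bool" where
  "goodf a N w \<longleftrightarrow> (\<exists>n\<in>{1..N}. a * real n \<le> (\<Sum>i<n. \<Phi> (sh i w)))"

lemma goodf_meas[measurable]: "Measurable.pred SEQ (goodf a N)"
  unfolding goodf_def by measurable

lemma H_ev: "{\<omega> \<in> space M. \<Psi> c (zz \<omega>)} \<in> events"
proof -
  have "zz -` {w \<in> space SEQ. \<Psi> c w} \<inter> space M \<in> events"
    by (rule measurable_sets[OF zz_meas \<Psi>_meas])
  also have "zz -` {w \<in> space SEQ. \<Psi> c w} \<inter> space M = {\<omega> \<in> space M. \<Psi> c (zz \<omega>)}"
    using measurable_space[OF zz_meas] by auto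
  finally show ?thesis .
qed

lemma upper0:
  assumes tp: "pp < t"
  shows "prob {\<omega> \<in> space M. \<Psi> t (zz \<omega>)} = 0"
proof (rule ccontr)
  define H where "H = {\<omega> \<in> space M. \<Psi> t (zz \<omega>)}"
  assume "prob {\<omega> \<in> space M. \<Psi> t (zz \<omega>)} \<noteq> 0"
  then have H1: "prob H = 1" using H_01[of t] unfolding H_def by auto
  have Hev: "H \<in> events" unfolding H_def by (rule H_ev)
  have t0: "0 < t" using tp pp_nonneg by linarith
  define B where "B N = {\<omega> \<in> space M. \<not> goodf t N (zz \<omega>)}" for N
  have Bev: "B N \<in> events" for N unfolding B_def by measurable
  have Bdec: "decseq B"
    unfolding decseq_def B_def goodf_def by force
  have BH: "(\<Inter>N. B N) \<subseteq> space M - H"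
  proof
    fix \<omega> assume w: "\<omega> \<in> (\<Inter>N. B N)"
    then have sp: "\<omega> \<in> space M" by (auto simp: B_def)
    show "\<omega> \<in> space M - H"
    proof (rule ccontr)
      assume "\<omega> \<notin> space M - H"
      then have "\<Psi> t (zz \<omega>)" using sp by (auto simp: H_def)
      then obtain s where s: "\<forall>N. \<exists>n\<ge>N. t + 1 / real (Suc s) < (\<Sum>j<n. \<Phi> (sh j (zz \<omega>))) / real n"
        unfolding \<Psi>_def Hs_def by blast
      then obtain n where n: "n \<ge> 1" "t + 1 / real (Suc s) < (\<Sum>j<n. \<Phi> (sh j (zz \<omega>))) / real n" by blast
      have "t < (\<Sum>j<n. \<Phi> (sh j (zz \<omega>))) / real n"
        using n(2) by (smt (verit) divide_pos_pos of_nat_0_less_iff zero_less_Suc)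
      then have "t * real n \<le> (\<Sum>j<n. \<Phi> (sh j (zz \<omega>)))" using n(1) by (simp add: field_simps)
      then have "goodf t n (zz \<omega>)" unfolding goodf_def using n(1) by auto
      then show False using w by (auto simp: B_def)
    qed
  qed
  have "prob (\<Inter>N. B N) \<le> prob (space M - H)"
    using BH Hev by (intro finite_measure_mono) auto
  also have "\<dots> = 0" using prob_compl[OF Hev] H1 by simp
  finally have B0: "prob (\<Inter>N. B N) = 0" using measure_nonneg[of M] by (simp add: order_antisym)
  have lim: "(\<lambda>N. prob (B N)) \<longlonglongrightarrow> 0"
    using finite_Lim_measure_decseq[of B] Bev Bdec B0 by auto
  define \<epsilon> where "\<epsilon> = (t - pp) / (2 * t)"
  have \<epsilon>0: "\<epsilon> > 0" using tp t0 by (simp add: \<epsilon>_def)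
  obtain N where N: "prob (B N) < \<epsilon>"
    using order_tendstoD(2)[OF lim \<epsilon>0] by (auto dest: eventually_happens)
  define gb where "gb w = (if goodf t N w then 0 else 1 :: real)" for w
  have gbm[measurable]: "gb \<in> borel_measurable SEQ" unfolding gb_def by measurable
  have int_gb: "(\<integral>\<omega>. gb (sh j (zz \<omega>)) \<partial>M) = prob (B N)" for j
  proof -
    have "(\<integral>\<omega>. gb (sh j (zz \<omega>)) \<partial>M) = (\<integral>\<omega>. gb (zz \<omega>) \<partial>M)" by (rule integral_sh[OF gbm])
    also have "\<dots> = (\<integral>\<omega>. indicator (B N) \<omega> \<partial>M)"
      by (intro Bochner_Integration.integral_cong) (auto simp: gb_def B_def indicator_def)
    also have "\<dots> = prob (B N)" using Bev[of N] sets.sets_into_space by (simp add: Int_absorb2)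
    finally show ?thesis .
  qed
  have key: "t * real L - t * real L * prob (B N) \<le> (real L + real N) * pp" for L
  proof -
    have pw: "t * real L - t * (\<Sum>j<L. gb (sh j (zz \<omega>))) \<le> (\<Sum>j<L+N. Xs \<omega> j)" for \<omega>
    proof -
      have "t * real L - t * (\<Sum>j<L. if (\<exists>n\<in>{1..N}. t * real n \<le> (\<Sum>i<n. Xs \<omega> (0 + j + i))) then 0 else 1)
           \<le> (\<Sum>j<L+N. Xs \<omega> (0 + j))"
        by (rule cover) (auto simp: Xs_def \<Phi>0 t0 less_imp_le)
      moreover have "(\<Sum>i<n. Xs \<omega> (0 + j + i)) = (\<Sum>i<n. \<Phi> (sh i (sh j (zz \<omega>))))" for n j
        by (simp add: Xs_def sh_sh)
      ultimately show ?thesis by (simp add: gb_def goodf_def)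
    qed
    have i1: "integrable M (\<lambda>\<omega>. Xs \<omega> j)" for j
      by (rule integrable_const_bound[where B=1]) (auto simp: Xs_def \<Phi>0 \<Phi>1 abs_le_iff)
    have i2: "integrable M (\<lambda>\<omega>. gb (sh j (zz \<omega>)))" for j
      by (rule integrable_const_bound[where B=1]) (auto simp: gb_def)
    have "(\<integral>\<omega>. t * real L - t * (\<Sum>j<L. gb (sh j (zz \<omega>))) \<partial>M) \<le> (\<integral>\<omega>. (\<Sum>j<L+N. Xs \<omega> j) \<partial>M)"
      using pw i1 i2 by (intro integral_mono) auto
    also have "(\<integral>\<omega>. (\<Sum>j<L+N. Xs \<omega> j) \<partial>M) = (\<Sum>j<L+N. (\<integral>\<omega>. Xs \<omega> j \<partial>M))"
      using Bochner_Integration.integral_sum[where I="{..<L+N}" and f="\<lambda>j \<omega>. Xs \<omega> j"] i1 by simp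
    also have "\<dots> = (real L + real N) * pp" by (simp add: int_X)
    also have "(\<integral>\<omega>. t * real L - t * (\<Sum>j<L. gb (sh j (zz \<omega>))) \<partial>M)
        = t * real L - t * (\<Sum>j<L. (\<integral>\<omega>. gb (sh j (zz \<omega>)) \<partial>M))"
      using i2 by (simp add: integral_diff integral_sum prob_space)
    also have "\<dots> = t * real L - t * real L * prob (B N)" by (simp add: int_gb)
    finally show ?thesis .
  qed
  obtain L :: nat where L: "real N * pp / ((t - pp) / 2) < real L" using reals_Archimedean2 by blast
  have d: "(t - pp) / 2 > 0" using tp by simp
  have "real N * pp < real L * ((t - pp) / 2)" using L d by (simp add: field_simps)
  moreover have "t * real L * prob (B N) \<le> t * real L * \<epsilon>"
    using N t0 by (intro mult_left_mono) auto
  moreover have "t * real L * \<epsilon> = real L * ((t - pp) / 2)" using t0 by (simp add: \<epsilon>_def field_simps)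
  ultimately have "t * real L - t * real L * prob (B N) > (real L + real N) * pp"
    by (simp add: algebra_simps)
  then show False using key[of L] by linarith
qed

lemma upper:
  assumes tp: "pp < t"
  shows "AE \<omega> in M. \<not> \<Psi> t (zz \<omega>)"
proof -
  have "{\<omega> \<in> space M. \<Psi> t (zz \<omega>)} \<in> null_sets M"
    using upper0[OF tp] H_ev by (simp add: null_sets_def emeasure_eq_measure)
  from AE_not_in[OF this] show ?thesis by (rule AE_mp) auto
qed

lemma conv_avg: "AE \<omega> in M. (\<lambda>n. (\<Sum>j<n. Xs \<omega> j) / real n) \<longlonglongrightarrow> pp"
proof -
  interpret N: iidphi M \<zeta> "\<lambda>w. 1 - \<Phi> w"
    by unfold_locales (auto simp: \<Phi>0 \<Phi>1)
  have Npp: "N.pp = 1 - pp"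
  proof -
    have "N.pp = (\<integral>\<omega>. 1 - \<Phi> (zz \<omega>) \<partial>M)" by (simp add: N.pp_def)
    also have "\<dots> = 1 - pp" unfolding pp_def
      by (subst Bochner_Integration.integral_diff) (auto simp: prob_space intro!: integrable_const_bound[where B=1] simp: \<Phi>0 \<Phi>1 abs_le_iff)
    finally show ?thesis .
  qed
  have "AE \<omega> in M. \<forall>s. \<not> \<Psi> (pp + 1 / real (Suc s)) (zz \<omega>)"
    by (subst AE_all_countable) (auto intro!: upper)
  moreover have "AE \<omega> in M. \<forall>s. \<not> N.\<Psi> (N.pp + 1 / real (Suc s)) (zz \<omega>)"
    by (subst AE_all_countable) (auto intro!: N.upper)
  ultimately show ?thesis
  proof eventually_elim
    case (elim \<omega>)
    have x: "Xs \<omega> = (\<lambda>j. \<Phi> (sh j (zz \<omega>)))" by (auto simp: Xs_def)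
    show ?case
      by (rule conv_det) (use elim in \<open>auto simp: x \<Psi>_def N.\<Psi>_def Npp\<close>)
  qed
qed

end

definition Vf :: "(nat \<Rightarrow> nat) \<Rightarrow> real" where
  "Vf w = (\<Sum>n. real (w n) / 2 ^ n)"

lemma Vf_meas[measurable]: "Vf \<in> borel_measurable SEQ"
  unfolding Vf_def by measurable

lemma digit_shift:
  assumes sm: "summable (\<lambda>n. real (w n) / 2 ^ n)"
  shows "D j k (Vf w) = D 0 k (Vf (sh j w))"
proof -
  have sm2: "summable (\<lambda>n. real (w (n + j)) / 2 ^ (n + j))"
    using summable_ignore_initial_segment[OF sm, of j] by simp
  have sm3: "summable (\<lambda>n. real (sh j w n) / 2 ^ n)"
  proof -
    have "(\<lambda>n. real (sh j w n) / 2 ^ n) = (\<lambda>n. 2 ^ j * (real (w (n + j)) / 2 ^ (n + j)))"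
      by (auto simp: sh_def power_add add.commute)
    then show ?thesis using summable_mult[OF sm2, of "2 ^ j"] by simp
  qed
  have "Vf w = (\<Sum>n. real (w (n + j)) / 2 ^ (n + j)) + (\<Sum>n<j. real (w n) / 2 ^ n)"
    unfolding Vf_def by (rule suminf_split_initial_segment[OF sm])
  also have "(\<Sum>n. real (w (n + j)) / 2 ^ (n + j)) = (\<Sum>n. real (sh j w n) / 2 ^ n) / 2 ^ j"
  proof -
    have "(\<lambda>n. real (w (n + j)) / 2 ^ (n + j)) = (\<lambda>n. (real (sh j w n) / 2 ^ n) / 2 ^ j)"
      by (auto simp: sh_def power_add add.commute)
    moreover note sm3
    ultimately show ?thesis using suminf_divide[of "\<lambda>n. real (sh j w n) / 2 ^ n" "2 ^ j"] by simp
  qed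
  finally have V: "Vf w = Vf (sh j w) / 2 ^ j + (\<Sum>n<j. real (w n) / 2 ^ n)" by (simp add: Vf_def)
  define I where "I = (\<Sum>n<j. w n * 2 ^ (j - n))"
  have I: "2 ^ j * (\<Sum>n<j. real (w n) / 2 ^ n) = real I"
    unfolding I_def of_nat_sum sum_distrib_left
  proof (rule sum.cong[OF refl])
    fix n assume "n \<in> {..<j}"
    then have "(2::real) ^ j = 2 ^ (j - n) * 2 ^ n" by (simp add: power_add[symmetric])
    then show "2 ^ j * (real (w n) / 2 ^ n) = real (w n * 2 ^ (j - n))" by simp
  qed
  have "2 ^ (j + k) * Vf w = 2 ^ k * Vf (sh j w) + real (2 ^ k * I)"
    unfolding V using I by (simp add: power_add field_simps)
  then have fl: "\<lfloor>2 ^ (j + k) * Vf w\<rfloor> = \<lfloor>2 ^ k * Vf (sh j w)\<rfloor> + int (2 ^ k * I)"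
    by (metis floor_add_int of_int_of_nat_eq)
  have nn: "0 \<le> Vf (sh j w)" unfolding Vf_def
    using sm3 by (intro suminf_nonneg) auto
  then have "0 \<le> \<lfloor>2 ^ k * Vf (sh j w)\<rfloor>" by simp
  then have "nat \<lfloor>2 ^ (j + k) * Vf w\<rfloor> = nat \<lfloor>2 ^ k * Vf (sh j w)\<rfloor> + 2 ^ k * I"
    unfolding fl by (metis nat_add_distrib nat_int of_nat_0_le_iff)
  then show ?thesis unfolding D_def by simp
qed

theorem lemma3p5:
  fixes M :: "'a measure" and \<zeta> :: "nat \<Rightarrow> 'a \<Rightarrow> nat" and k l :: nat
  assumes "prob_space M"
    and indep: "prob_space.indep_vars M (\<lambda>_. count_space UNIV) \<zeta> UNIV"
    and ident: "\<And>n. distr M (count_space UNIV) (\<zeta> n) = distr M (count_space UNIV) (\<zeta> 0)"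
    and pos: "\<And>i. measure M {\<omega> \<in> space M. \<zeta> 0 \<omega> = i} > 0"
    and conv: "AE \<omega> in M. summable (\<lambda>n. real (\<zeta> n \<omega>) / 2 ^ n)"
    and "k > 0" and "l < 2 ^ k"
  shows "AE \<omega> in M.
           (\<lambda>n. (\<Sum>j<n. if D j k (Shat \<zeta> \<omega>) = l then 1 else 0) / real n)
             \<longlonglongrightarrow> measure M {\<omega> \<in> space M. D 0 k (Shat \<zeta> \<omega>) = l}"
proof -
  define \<Phi> where "\<Phi> w = (if D 0 k (Vf w) = l then 1 else 0 :: real)" for w
  have I: "iidseq M \<zeta>"
    unfolding iidseq_def iidseq_axioms_def using assms(1,2) ident by blast
  have "\<Phi> \<in> borel_measurable SEQ" unfolding \<Phi>_def D_def by measurable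
  then interpret iidphi M \<zeta> \<Phi>
    by (intro iidphi.intro[OF I] iidphi_axioms.intro) (auto simp: \<Phi>_def)
  have Sh: "Shat \<zeta> \<omega> = Vf (zz \<omega>)" for \<omega> by (simp add: Shat_def Vf_def zz_def)
  have ppeq: "pp = measure M {\<omega> \<in> space M. D 0 k (Shat \<zeta> \<omega>) = l}"
  proof -
    have "pp = (\<integral>\<omega>. indicator {\<omega> \<in> space M. D 0 k (Shat \<zeta> \<omega>) = l} \<omega> \<partial>M)"
      unfolding pp_def by (intro Bochner_Integration.integral_cong) (auto simp: \<Phi>_def Sh indicator_def)
    also have "\<dots> = measure M {\<omega> \<in> space M. D 0 k (Shat \<zeta> \<omega>) = l}"
      by (simp add: Int_absorb2 subset_iff)
    finally show ?thesis .
  qed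
  show ?thesis
    using conv_avg conv
  proof eventually_elim
    case (elim \<omega>)
    have "(\<lambda>n. (\<Sum>j<n. if D j k (Shat \<zeta> \<omega>) = l then 1 else 0) / real n) = (\<lambda>n. (\<Sum>j<n. Xs \<omega> j) / real n)"
    proof (intro ext arg_cong[where f="\<lambda>x. x / _"] sum.cong refl)
      fix n j
      have "D j k (Shat \<zeta> \<omega>) = D 0 k (Vf (sh j (zz \<omega>)))"
        unfolding Sh by (rule digit_shift) (use elim(2) in \<open>simp add: zz_def\<close>)
      then show "(if D j k (Shat \<zeta> \<omega>) = l then 1 else 0) = Xs \<omega> j"
        by (simp add: Xs_def \<Phi>_def)
    qed
    then show ?case using elim(1) ppeq by simp
  qed
qed

end
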